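(* Let $\boldsymbol{X}_i=(X_{i1},\ldots,X_{id})$, $i\in\{1,\ldots,n\}$, be independent and identically distributed random vectors in $\mathbb{R}^d$ with continuous joint distribution function $F$. Let $(W_{n1},\ldots,W_{nn})$ be a multinomial random vector with $n$ trials and success probabilities $(1/n,\ldots,1/n)$, independent of $\boldsymbol{X}_1,\ldots,\boldsymbol{X}_n$. Define \[ \mathbb{F}_n^*(\boldsymbol{x}):=\frac{1}{n}\sum_{i=1}^n W_{ni}\prod_{j=1}^d \mathbbm{1}\{X_{ij}\le x_j\},\qquad \mathbb{F}_{nj}^*(x_j):=\frac{1}{n}\sum_{i=1}^n W_{ni}\mathbbm{1}\{X_{ij}\le x_j\},\quad j\in\{1,\ldots,d\}, \] the bootstrapped empirical copula \[ \mathbb{C}_n^*(\boldsymbol{u}):=\mathbb{F}_n^*\bigl(\mathbb{F}_{n1}^{*-}(u_1),\ldots,\mathbb{F}_{nd}^{*-}(u_d)\bigr),\qquad \boldsymbol{u}\in[0,1]^d, \] the bootstrapped ranks $R^*_{ij,n}:=\sum_{k=1}^n W_{nk}\mathbbm{1}\{X_{kj}\le X_{ij}\}$, and the bootstrapped rank-based empirical copula \[ \tilde{\mathbb{C}}_n^*(\boldsymbol{u}):=\frac{1}{n}\sum_{i=1}^n W_{ni}\prod_{j=1}^d\mathbbm{1}\Bigl\{\frac{R^*_{ij,n}}{n}\le u_j\Bigr\},\qquad \boldsymbol{u}\in[0,1]^d. \] Then \[ \sup_{\boldsymbol{u}\in[0,1]^d}\bigl\lvert \mathbb{C}_n^*(\boldsymbol{u})-\tilde{\mathbb{C}}_n^*(\boldsymbol{u})\bigr\rvert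 = O_p\bigl(n^{-1}\log n\bigr),\qquad n\to\infty. \]
   Context: For a distribution function $H$ on $\mathbb{R}$, $H^-(u)=\inf\{t\in\mathbb{R}: H(t)\ge u\}$ denotes its generalized inverse. $O_p$ denotes stochastic boundedness (in probability, jointly over the data and the multinomial weights). *)

theory Defs
  imports "HOL-Probability.Probability"
begin

text \<open>Multinomial vector with n trials and success probabilities (1/n,...,1/n),
  represented as a list of length n (entry i = number of trials landing in cell i).\<close>
definition multinomial_unif :: "nat \<Rightarrow> nat list pmf" where
  "multinomial_unif n =
     map_pmf (\<lambda>f. map (\<lambda>i. card {k\<in>{..<n}. f k = i}) [0..<n])
             (Pi_pmf {..<n} 0 (\<lambda>_. pmf_of_set {..<n}))"

text \<open>Generalized inverse H^-(u) = inf {t. H t >= u}, taken in the extended reals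
  (so that H^-(0) = -infinity).\<close>
definition geninv :: "(real \<Rightarrow> real) \<Rightarrow> real \<Rightarrow> ereal" where
  "geninv H u = Inf (ereal ` {t. u \<le> H t})"

definition boot_F :: "nat \<Rightarrow> (nat \<Rightarrow> real^'d) \<Rightarrow> nat list \<Rightarrow> ereal^'d \<Rightarrow> real" where
  "boot_F n x w y = (1 / real n) *
     (\<Sum>i<n. real (w ! i) * (\<Prod>j\<in>UNIV. if ereal (x i $ j) \<le> y $ j then 1 else 0))"

definition boot_Fj :: "nat \<Rightarrow> (nat \<Rightarrow> real^'d) \<Rightarrow> nat list \<Rightarrow> 'd \<Rightarrow> real \<Rightarrow> real" where
  "boot_Fj n x w j t = (1 / real n) *
     (\<Sum>i<n. real (w ! i) * (if x i $ j \<le> t then 1 else 0))"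

definition boot_C :: "nat \<Rightarrow> (nat \<Rightarrow> real^'d) \<Rightarrow> nat list \<Rightarrow> real^'d \<Rightarrow> real" where
  "boot_C n x w u = boot_F n x w (\<chi> j. geninv (boot_Fj n x w j) (u $ j))"

definition boot_rank :: "nat \<Rightarrow> (nat \<Rightarrow> real^'d) \<Rightarrow> nat list \<Rightarrow> nat \<Rightarrow> 'd \<Rightarrow> real" where
  "boot_rank n x w i j = (\<Sum>k<n. real (w ! k) * (if x k $ j \<le> x i $ j then 1 else 0))"

definition boot_Ctilde :: "nat \<Rightarrow> (nat \<Rightarrow> real^'d) \<Rightarrow> nat list \<Rightarrow> real^'d \<Rightarrow> real" where
  "boot_Ctilde n x w u = (1 / real n) *
     (\<Sum>i<n. real (w ! i) *
        (\<Prod>j\<in>UNIV. if boot_rank n x w i j / real n \<le> u $ j then 1 else 0))"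

definition unit_cube :: "(real^'d) set" where
  "unit_cube = {u. \<forall>j. 0 \<le> u $ j \<and> u $ j \<le> 1}"

end

theory Submission
  imports Defs
begin


definition Lr :: "nat \<Rightarrow> (nat \<Rightarrow> real^'d) \<Rightarrow> nat list \<Rightarrow> nat \<Rightarrow> 'd \<Rightarrow> real" where
  "Lr n x w i j = (1/real n) * (\<Sum>k<n. real (w!k) * (if x k $ j < x i $ j then 1 else 0))"

lemma geninv_iff:
  "ereal y \<le> geninv (boot_Fj n x w j) u \<longleftrightarrow>
     (1/real n) * (\<Sum>k<n. real (w!k) * (if x k $ j < y then 1 else 0)) < u"
proof -
  let ?H = "boot_Fj n x w j"
  let ?L = "(1/real n) * (\<Sum>k<n. real (w!k) * (if x k $ j < y then 1 else 0))"
  have "ereal y \<le> geninv ?H u \<longleftrightarrow> (\<forall>t. u \<le> ?H t \<longrightarrow> y \<le> t)"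
    unfolding geninv_def by (auto simp: le_Inf_iff)
  also have "\<dots> \<longleftrightarrow> ?L < u"
  proof
    assume A: "\<forall>t. u \<le> ?H t \<longrightarrow> y \<le> t"
    define t0 where "t0 = Max (insert (y-1) {x k $ j | k. k<n \<and> x k $ j < y})"
    have fin: "finite {x k $ j | k. k<n \<and> x k $ j < y}" by simp
    have t0y: "t0 < y" unfolding t0_def using fin by (subst Max_less_iff) auto
    have iff: "x k $ j \<le> t0 \<longleftrightarrow> x k $ j < y" if k: "k < n" for k
    proof
      assume "x k $ j \<le> t0" then show "x k $ j < y" using t0y by simp
    next
      assume "x k $ j < y" then show "x k $ j \<le> t0" unfolding t0_def using fin k
        by (intro Max_ge) auto
    qed
    have Ht0: "?H t0 = ?L" unfolding boot_Fj_def
      by (intro arg_cong[where f="\<lambda>z. (1/real n) * z"] sum.cong refl) (simp add: iff)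
    show "?L < u"
    proof (rule ccontr)
      assume "\<not> ?L < u"
      then have "u \<le> ?H t0" using Ht0 by simp
      with A have "y \<le> t0" by blast
      with t0y show False by simp
    qed
  next
    assume L: "?L < u"
    show "\<forall>t. u \<le> ?H t \<longrightarrow> y \<le> t"
    proof (intro allI impI)
      fix t assume ut: "u \<le> ?H t"
      show "y \<le> t"
      proof (rule ccontr)
        assume "\<not> y \<le> t"
        have "?H t \<le> ?L" unfolding boot_Fj_def
          using \<open>\<not> y \<le> t\<close> by (intro mult_left_mono sum_mono) auto
        with L ut show False by simp
      qed
    qed
  qed
  finally show ?thesis .
qed

lemma boot_C_repr:
  "boot_C n x w u = (1/real n) * (\<Sum>i<n. real (w!i) *
      (\<Prod>j\<in>UNIV. if Lr n x w i j < u $ j then 1 else 0))"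
  unfolding boot_C_def boot_F_def Lr_def by (simp add: geninv_iff)

lemma prod_diff_le:
  fixes a b :: "'a \<Rightarrow> real"
  assumes "finite S" "\<forall>j\<in>S. 0 \<le> a j \<and> a j \<le> 1 \<and> 0 \<le> b j \<and> b j \<le> 1"
  shows "\<bar>prod a S - prod b S\<bar> \<le> (\<Sum>j\<in>S. \<bar>a j - b j\<bar>)"
  using assms
proof (induction S rule: finite_induct)
  case empty then show ?case by simp
next
  case (insert s S)
  have pa: "0 \<le> prod a S" "prod a S \<le> 1" using insert by (auto intro: prod_nonneg prod_le_1)
  have bs: "0 \<le> b s" "b s \<le> 1" using insert by auto
  have "\<bar>prod a (insert s S) - prod b (insert s S)\<bar> = \<bar>a s * prod a S - b s * prod b S\<bar>"
    using insert by simp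
  also have "\<dots> = \<bar>(a s - b s) * prod a S + b s * (prod a S - prod b S)\<bar>"
    by (simp add: algebra_simps)
  also have "\<dots> \<le> \<bar>a s - b s\<bar> * \<bar>prod a S\<bar> + \<bar>b s\<bar> * \<bar>prod a S - prod b S\<bar>"
    by (metis abs_mult abs_triangle_ineq)
  also have "\<dots> \<le> \<bar>a s - b s\<bar> + \<bar>prod a S - prod b S\<bar>"
    using pa bs by (intro add_mono mult_left_le mult_left_le_one_le) auto
  also have "\<dots> \<le> \<bar>a s - b s\<bar> + (\<Sum>j\<in>S. \<bar>a j - b j\<bar>)"
    using insert by auto
  finally show ?case using insert by simp
qed

lemma rank_eq:
  fixes x :: "nat \<Rightarrow> real^'d::finite"
  assumes noties: "\<And>i k. i<n \<Longrightarrow> k<n \<Longrightarrow> x i $ j = x k $ j \<Longrightarrow> i = k"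
    and i: "i < n"
  shows "boot_rank n x w i j / real n = Lr n x w i j + real (w!i) / real n"
proof -
  have "boot_rank n x w i j = (\<Sum>k<n. real (w!k) * (if x k $ j < x i $ j then 1 else 0)
          + real (w!k) * (if k = i then 1 else 0))"
    unfolding boot_rank_def
  proof (intro sum.cong refl)
    fix k assume "k \<in> {..<n}"
    then have "x k $ j = x i $ j \<Longrightarrow> k = i" using noties i by auto
    then show "real (w!k) * (if x k $ j \<le> x i $ j then 1 else 0) =
       real (w!k) * (if x k $ j < x i $ j then 1 else 0) + real (w!k) * (if k = i then 1 else 0)"
      by (cases "x k $ j < x i $ j"; cases "k = i") auto
  qed
  also have "\<dots> = (\<Sum>k<n. real (w!k) * (if x k $ j < x i $ j then 1 else 0)) + real (w!i)"
  proof -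
    have "(\<Sum>k<n. real (w!k) * (if k = i then 1 else 0)) = (\<Sum>k<n. if k = i then real (w!i) else 0)"
      by (intro sum.cong) auto
    also have "\<dots> = real (w!i)" using i by simp
    finally show ?thesis by (simp add: sum.distrib)
  qed
  finally show ?thesis unfolding Lr_def by (simp add: add_divide_distrib)
qed

lemma diff_bound_j:
  fixes x :: "nat \<Rightarrow> real^'d::finite"
  assumes noties: "\<And>i k. i<n \<Longrightarrow> k<n \<Longrightarrow> x i $ j = x k $ j \<Longrightarrow> i = k"
    and wm: "\<And>i. i<n \<Longrightarrow> w!i \<le> m"
  shows "(\<Sum>i<n. real (w!i) * \<bar>(if Lr n x w i j < t then 1 else 0)
            - (if boot_rank n x w i j / real n \<le> t then 1 else 0)\<bar>) \<le> real m"
proof -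
  define S where "S = {i\<in>{..<n}. 0 < w!i \<and> Lr n x w i j < t \<and> t < Lr n x w i j + real (w!i) / real n}"
  have termb: "real (w!i) * \<bar>(if Lr n x w i j < t then 1 else 0)
            - (if boot_rank n x w i j / real n \<le> t then 1 else 0)\<bar> \<le> (if i \<in> S then real (w!i) else 0)"
    if i: "i \<in> {..<n}" for i
  proof (cases "w!i = 0")
    case True then show ?thesis by simp
  next
    case False
    then have n: "n > 0" using i by auto
    have lt: "Lr n x w i j < Lr n x w i j + real (w!i) / real n" using False n by simp
    have R: "boot_rank n x w i j / real n = Lr n x w i j + real (w!i) / real n"
      using i by (intro rank_eq noties) auto
    show ?thesis
    proof (cases "i \<in> S")
      case True then show ?thesis by simp
    next
      case nS: False
      then have "\<not> (Lr n x w i j < t \<and> t < Lr n x w i j + real (w!i) / real n)"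
        using i False unfolding S_def by auto
      then show ?thesis using nS R lt by (auto simp del: of_nat_eq_0_iff)
    qed
  qed
  have key: "x i $ j < x i' $ j \<Longrightarrow> Lr n x w i j + real (w!i) / real n \<le> Lr n x w i' j"
    if "i < n" "i' < n" for i i'
  proof -
    assume lt: "x i $ j < x i' $ j"
    have "Lr n x w i j + real (w!i) / real n = boot_rank n x w i j / real n"
      using that by (intro rank_eq[symmetric] noties) auto
    also have "\<dots> \<le> Lr n x w i' j" unfolding boot_rank_def Lr_def
      using lt by (auto simp: divide_simps intro!: mult_left_mono sum_mono)
    finally show ?thesis .
  qed
  have uniq: "\<forall>a1\<in>S. \<forall>a2\<in>S. a1 = a2"
  proof (intro ballI)
    fix a1 a2 assume a: "a1 \<in> S" "a2 \<in> S"
    show "a1 = a2"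
    proof (rule ccontr)
      assume ne: "a1 \<noteq> a2"
      have "x a1 $ j \<noteq> x a2 $ j" using noties ne a unfolding S_def by auto
      then consider "x a1 $ j < x a2 $ j" | "x a2 $ j < x a1 $ j" by linarith
      then show False
      proof cases
        case 1 then show False using key[of a1 a2] a unfolding S_def by auto
      next
        case 2 then show False using key[of a2 a1] a unfolding S_def by auto
      qed
    qed
  qed
  have finS: "finite S" unfolding S_def by simp
  have cS: "card S \<le> 1" using uniq finS by (simp add: card_le_Suc0_iff_eq)
  have "(\<Sum>i<n. real (w!i) * \<bar>(if Lr n x w i j < t then 1 else 0)
            - (if boot_rank n x w i j / real n \<le> t then 1 else 0)\<bar>)
        \<le> (\<Sum>i<n. if i \<in> S then real (w!i) else 0)"
    by (intro sum_mono termb)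
  also have "\<dots> = (\<Sum>i\<in>S. real (w!i))"
    by (simp add: sum.If_cases S_def Int_absorb1 cong: if_cong) (intro sum.cong; auto)
  also have "\<dots> \<le> real (card S) * real m"
    using sum_bounded_above[of S "\<lambda>i. real (w!i)" "real m"] wm unfolding S_def by auto
  also have "\<dots> \<le> real m" using cS by (cases "card S") auto
  finally show ?thesis .
qed

lemma diff_bound_gen:
  fixes x :: "nat \<Rightarrow> real^'d::finite"
  shows "\<bar>boot_C n x w u - boot_Ctilde n x w u\<bar> \<le>
     (1/real n) * (\<Sum>j\<in>UNIV. \<Sum>i<n. real (w!i) * \<bar>(if Lr n x w i j < u $ j then 1 else 0)
            - (if boot_rank n x w i j / real n \<le> u $ j then 1 else 0)\<bar>)"
proof -
  define a where "a i j = (if Lr n x w i j < u $ j then 1 else 0::real)" for i j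
  define b where "b i j = (if boot_rank n x w i j / real n \<le> u $ j then 1 else 0::real)" for i j
  have "boot_C n x w u - boot_Ctilde n x w u = (1/real n) * (\<Sum>i<n. real (w!i) * (prod (a i) UNIV - prod (b i) UNIV))"
    unfolding boot_C_repr boot_Ctilde_def a_def b_def
    by (simp add: sum_subtractf right_diff_distrib)
  then have "\<bar>boot_C n x w u - boot_Ctilde n x w u\<bar> = (1/real n) * \<bar>\<Sum>i<n. real (w!i) * (prod (a i) UNIV - prod (b i) UNIV)\<bar>"
    by (simp add: abs_mult)
  also have "\<dots> \<le> (1/real n) * (\<Sum>i<n. real (w!i) * \<bar>prod (a i) UNIV - prod (b i) UNIV\<bar>)"
    by (intro mult_left_mono order.trans[OF sum_abs]) (auto simp: abs_mult)
  also have "\<dots> \<le> (1/real n) * (\<Sum>i<n. real (w!i) * (\<Sum>j\<in>UNIV. \<bar>a i j - b i j\<bar>))"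
    by (intro mult_left_mono sum_mono prod_diff_le) (auto simp: a_def b_def)
  also have "\<dots> = (1/real n) * (\<Sum>j\<in>UNIV. \<Sum>i<n. real (w!i) * \<bar>a i j - b i j\<bar>)"
    by (simp add: sum_distrib_left sum.swap[of _ "{..<n}"])
  finally show ?thesis unfolding a_def b_def .
qed

lemma diff_bound:
  fixes x :: "nat \<Rightarrow> real^'d::finite"
  assumes noties: "\<And>i k j. i<n \<Longrightarrow> k<n \<Longrightarrow> x i $ j = x k $ j \<Longrightarrow> i = k"
    and wm: "\<And>i. i<n \<Longrightarrow> w!i \<le> m"
  shows "\<bar>boot_C n x w u - boot_Ctilde n x w u\<bar> \<le> real CARD('d) * real m / real n"
proof -
  have "\<bar>boot_C n x w u - boot_Ctilde n x w u\<bar> \<le>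
     (1/real n) * (\<Sum>j\<in>(UNIV::'d set). real m)"
    by (rule order.trans[OF diff_bound_gen], intro mult_left_mono sum_mono diff_bound_j noties wm) auto
  then show ?thesis by simp
qed

lemma diff_bound_w:
  fixes x :: "nat \<Rightarrow> real^'d::finite"
  shows "\<bar>boot_C n x w u - boot_Ctilde n x w u\<bar> \<le> (1/real n) * (real CARD('d) * (\<Sum>i<n. real (w!i)))"
proof -
  have "\<bar>boot_C n x w u - boot_Ctilde n x w u\<bar> \<le>
     (1/real n) * (\<Sum>j\<in>(UNIV::'d set). \<Sum>i<n. real (w!i))"
    by (rule order.trans[OF diff_bound_gen], intro mult_left_mono sum_mono) (auto intro: mult_right_le_one_le)
  then show ?thesis by simp
qed

lemma coord_reduce:
  fixes A :: "real set"
  assumes fin: "finite A" and A01: "0 \<in> A" "1 \<in> A" and t: "0 \<le> t" "t \<le> 1"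
  shows "\<exists>a\<in>A. \<exists>b\<in>A. 0 \<le> (a+b)/2 \<and> (a+b)/2 \<le> 1 \<and>
           (\<forall>z\<in>A. (z < t \<longleftrightarrow> z < (a+b)/2) \<and> (z \<le> t \<longleftrightarrow> z \<le> (a+b)/2))"
proof (cases "t \<in> A")
  case True then show ?thesis using t by (intro bexI[of _ t]) auto
next
  case False
  define a where "a = Max {z\<in>A. z < t}"
  define b where "b = Min {z\<in>A. t < z}"
  have t01: "0 < t" "t < 1" using False t A01 by (auto simp: order.order_iff_strict)
  have fa: "finite {z\<in>A. z < t}" "{z\<in>A. z < t} \<noteq> {}" using fin A01 t01 by auto
  have fb: "finite {z\<in>A. t < z}" "{z\<in>A. t < z} \<noteq> {}" using fin A01 t01 by auto
  have aA: "a \<in> A" "a < t" using Max_in[OF fa] unfolding a_def by auto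
  have bA: "b \<in> A" "t < b" using Min_in[OF fb] unfolding b_def by auto
  have a0: "0 \<le> a" unfolding a_def using fa A01 t01 by (intro Max_ge) auto
  have b1: "b \<le> 1" unfolding b_def using fb A01 t01 by (intro Min_le) auto
  have le_a: "z \<le> a" if "z \<in> A" "z < t" for z unfolding a_def using that fa by (intro Max_ge) auto
  have ge_b: "b \<le> z" if "z \<in> A" "t < z" for z unfolding b_def using that fb by (intro Min_le) auto
  have H: "\<forall>z\<in>A. (z < t \<longleftrightarrow> z < (a+b)/2) \<and> (z \<le> t \<longleftrightarrow> z \<le> (a+b)/2)"
  proof
    fix z assume z: "z \<in> A"
    have "z \<noteq> t" using z False by auto
    then consider "z < t" | "t < z" by linarith
    then show "(z < t \<longleftrightarrow> z < (a+b)/2) \<and> (z \<le> t \<longleftrightarrow> z \<le> (a+b)/2)"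
    proof cases
      case 1 then show ?thesis using le_a[OF z] aA bA by auto
    next
      case 2 then show ?thesis using ge_b[OF z] aA bA by auto
    qed
  qed
  moreover have "0 \<le> (a+b)/2" "(a+b)/2 \<le> 1" using a0 b1 aA bA by auto
  ultimately show ?thesis using aA(1) bA(1) by blast
qed

definition cand :: "nat \<Rightarrow> (nat \<Rightarrow> real^'d) \<Rightarrow> nat list \<Rightarrow> 'd \<Rightarrow> nat \<Rightarrow> real" where
  "cand n x w j p = (if p = 0 then 0 else if p = 1 then 1 else if p < n+2 then Lr n x w (p-2) j
                     else boot_rank n x w (p-n-2) j / real n)"

definition vpq :: "nat \<Rightarrow> (nat \<Rightarrow> real^'d) \<Rightarrow> nat list \<Rightarrow> ('d \<Rightarrow> nat) \<Rightarrow> ('d \<Rightarrow> nat) \<Rightarrow> real^'d" where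
  "vpq n x w p q = (\<chi> j. (cand n x w j (p j) + cand n x w j (q j)) / 2)"

lemma reduce:
  fixes x :: "nat \<Rightarrow> real^'d::finite"
  assumes u: "u \<in> unit_cube"
  shows "\<exists>p q. (\<forall>j. p j < 2*n+2 \<and> q j < 2*n+2) \<and> vpq n x w p q \<in> unit_cube \<and>
           boot_C n x w (vpq n x w p q) = boot_C n x w u \<and>
           boot_Ctilde n x w (vpq n x w p q) = boot_Ctilde n x w u"
proof -
  let ?A = "\<lambda>j. cand n x w j ` {..<2*n+2}"
  have "\<forall>j. \<exists>pq::nat\<times>nat. fst pq < 2*n+2 \<and> snd pq < 2*n+2 \<and>
          0 \<le> (cand n x w j (fst pq) + cand n x w j (snd pq))/2 \<and>
          (cand n x w j (fst pq) + cand n x w j (snd pq))/2 \<le> 1 \<and>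
          (\<forall>z\<in>?A j. (z < u $ j \<longleftrightarrow> z < (cand n x w j (fst pq) + cand n x w j (snd pq))/2) \<and>
                    (z \<le> u $ j \<longleftrightarrow> z \<le> (cand n x w j (fst pq) + cand n x w j (snd pq))/2))"
  proof
    fix j
    have "0 \<in> ?A j" by (rule image_eqI[of _ _ 0]) (auto simp: cand_def)
    moreover have "1 \<in> ?A j" by (rule image_eqI[of _ _ 1]) (auto simp: cand_def)
    ultimately obtain a b where ab: "a \<in> ?A j" "b \<in> ?A j" "0 \<le> (a+b)/2" "(a+b)/2 \<le> 1"
       "\<forall>z\<in>?A j. (z < u $ j \<longleftrightarrow> z < (a+b)/2) \<and> (z \<le> u $ j \<longleftrightarrow> z \<le> (a+b)/2)"
      using coord_reduce[of "?A j" "u $ j"] u unfolding unit_cube_def by blast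
    from ab(1,2) obtain p q where "p < 2*n+2" "q < 2*n+2" "a = cand n x w j p" "b = cand n x w j q" by auto
    then show "\<exists>pq::nat\<times>nat. fst pq < 2*n+2 \<and> snd pq < 2*n+2 \<and>
          0 \<le> (cand n x w j (fst pq) + cand n x w j (snd pq))/2 \<and>
          (cand n x w j (fst pq) + cand n x w j (snd pq))/2 \<le> 1 \<and>
          (\<forall>z\<in>?A j. (z < u $ j \<longleftrightarrow> z < (cand n x w j (fst pq) + cand n x w j (snd pq))/2) \<and>
                    (z \<le> u $ j \<longleftrightarrow> z \<le> (cand n x w j (fst pq) + cand n x w j (snd pq))/2))"
      using ab by (intro exI[of _ "(p,q)"]) auto
  qed
  then obtain f where f: "\<forall>j. fst (f j) < 2*n+2 \<and> snd (f j) < 2*n+2 \<and>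
          0 \<le> (cand n x w j (fst (f j)) + cand n x w j (snd (f j)))/2 \<and>
          (cand n x w j (fst (f j)) + cand n x w j (snd (f j)))/2 \<le> 1 \<and>
          (\<forall>z\<in>?A j. (z < u $ j \<longleftrightarrow> z < (cand n x w j (fst (f j)) + cand n x w j (snd (f j)))/2) \<and>
                    (z \<le> u $ j \<longleftrightarrow> z \<le> (cand n x w j (fst (f j)) + cand n x w j (snd (f j)))/2))"
    by metis
  define p where "p j = fst (f j)" for j
  define q where "q j = snd (f j)" for j
  let ?v = "vpq n x w p q"
  have vj: "?v $ j = (cand n x w j (p j) + cand n x w j (q j))/2" for j
    unfolding vpq_def by simp
  have LA: "Lr n x w i j \<in> ?A j" if "i < n" for i j
    using that by (intro image_eqI[of _ _ "i+2"]) (auto simp: cand_def)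
  have RA: "boot_rank n x w i j / real n \<in> ?A j" if "i < n" for i j
    using that by (intro image_eqI[of _ _ "i+n+2"]) (auto simp: cand_def)
  have L: "Lr n x w i j < ?v $ j \<longleftrightarrow> Lr n x w i j < u $ j" if "i < n" for i j
    using f LA[OF that, of j] unfolding vj p_def q_def by blast
  have R: "boot_rank n x w i j / real n \<le> ?v $ j \<longleftrightarrow> boot_rank n x w i j / real n \<le> u $ j" if "i < n" for i j
    using f RA[OF that, of j] unfolding vj p_def q_def by blast
  have c1: "\<forall>j. p j < 2*n+2 \<and> q j < 2*n+2" using f unfolding p_def q_def by auto
  have c2: "?v \<in> unit_cube" unfolding unit_cube_def
  proof (intro CollectI allI)
    fix j
    have "0 \<le> (cand n x w j (fst (f j)) + cand n x w j (snd (f j)))/2 \<and>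
          (cand n x w j (fst (f j)) + cand n x w j (snd (f j)))/2 \<le> 1"
      using spec[OF f, of j] by blast
    then show "0 \<le> ?v $ j \<and> ?v $ j \<le> 1" unfolding vj p_def q_def .
  qed
  have c3: "boot_C n x w ?v = boot_C n x w u" unfolding boot_C_repr
      by (intro arg_cong[where f="\<lambda>z. (1/real n) * z"] sum.cong refl arg_cong[where f="\<lambda>z. real (w!_) * z"] prod.cong)
         (auto simp: L)
  have c4: "boot_Ctilde n x w ?v = boot_Ctilde n x w u" unfolding boot_Ctilde_def
      by (intro arg_cong[where f="\<lambda>z. (1/real n) * z"] sum.cong refl arg_cong[where f="\<lambda>z. real (w!_) * z"] prod.cong)
         (auto simp: R)
  show ?thesis using c1 c2 c3 c4 by blast
qed



lemma vn_meas[measurable]: "(\<lambda>v::real^'d. v $ j) \<in> borel_measurable borel"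
  by (intro borel_measurable_continuous_onI continuous_intros)

lemma marg_null:
  fixes X0 :: "'w \<Rightarrow> real^'d::finite"
  assumes P: "prob_space M" and Xm: "X0 \<in> borel_measurable M"
   and cont: "continuous_on UNIV (\<lambda>y::real^'d. measure M {\<omega>\<in>space M. \<forall>j. X0 \<omega> $ j \<le> y $ j})"
  shows "{\<omega>\<in>space M. X0 \<omega> $ j = t} \<in> null_sets M"
proof -
  interpret prob_space M by fact
  define S where "S y = {\<omega>\<in>space M. \<forall>j. X0 \<omega> $ j \<le> y $ j}" for y :: "real^'d"
  define F where "F y = measure M (S y)" for y
  have mX[measurable]: "\<And>j. (\<lambda>\<omega>. X0 \<omega> $ j) \<in> borel_measurable M"
    using measurable_compose[OF Xm vn_meas[where 'd='d]] by (simp add: o_def)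
  have Ssets: "S y \<in> sets M" for y unfolding S_def by measurable
  define A where "A K = {\<omega>\<in>space M. X0 \<omega> $ j = t \<and> (\<forall>i. i \<noteq> j \<longrightarrow> X0 \<omega> $ i \<le> real K)}" for K :: nat
  have Asets: "A K \<in> sets M" for K unfolding A_def by measurable
  have cover: "{\<omega>\<in>space M. X0 \<omega> $ j = t} \<subseteq> (\<Union>K. A K)"
  proof
    fix \<omega> assume \<omega>: "\<omega> \<in> {\<omega>\<in>space M. X0 \<omega> $ j = t}"
    obtain K :: nat where K: "(\<Sum>i\<in>UNIV. \<bar>X0 \<omega> $ i\<bar>) \<le> real K" using real_arch_simple by blast
    have "X0 \<omega> $ i \<le> real K" for i
    proof -
      have "X0 \<omega> $ i \<le> \<bar>X0 \<omega> $ i\<bar>" by simp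
      also have "\<dots> \<le> (\<Sum>i\<in>UNIV. \<bar>X0 \<omega> $ i\<bar>)" by (rule member_le_sum) auto
      finally show ?thesis using K by simp
    qed
    then show "\<omega> \<in> (\<Union>K. A K)" using \<omega> unfolding A_def by blast
  qed
  have Anull: "A K \<in> null_sets M" for K
  proof -
    define y where "y = (\<chi> i. if i = j then t else real K)"
    define yk where "yk k = (\<chi> i. if i = j then t + - inverse (real (Suc k)) else real K)" for k :: nat
    have le: "measure M (A K) \<le> F y - F (yk k)" for k
    proof -
      have yle: "yk k $ i \<le> y $ i" for i unfolding yk_def y_def by simp
      have sub1: "S (yk k) \<subseteq> S y" unfolding S_def using yle order_trans by blast
      have "A K \<subseteq> S y - S (yk k)"
      proof
        fix \<omega> assume \<omega>: "\<omega> \<in> A K"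
        have "\<omega> \<in> S y" using \<omega> unfolding A_def S_def y_def by auto
        moreover have "\<omega> \<notin> S (yk k)"
        proof
          assume "\<omega> \<in> S (yk k)"
          then have "X0 \<omega> $ j \<le> yk k $ j" unfolding S_def by blast
          then show False using \<omega> unfolding A_def yk_def by simp
        qed
        ultimately show "\<omega> \<in> S y - S (yk k)" by blast
      qed
      then have "measure M (A K) \<le> measure M (S y - S (yk k))"
        using Ssets by (intro finite_measure_mono) auto
      also have "\<dots> = F y - F (yk k)" unfolding F_def
        using Ssets sub1 by (intro finite_measure_Diff) auto
      finally show ?thesis .
    qed
    have "yk \<longlonglongrightarrow> y" unfolding yk_def y_def
    proof (intro tendsto_vec_lambda)
      fix i show "(\<lambda>k. if i = j then t + - inverse (real (Suc k)) else real K) \<longlonglongrightarrow> (if i = j then t else real K)"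
        using LIMSEQ_inverse_real_of_nat_add_minus[of t] by (cases "i = j") simp_all
    qed
    then have "(\<lambda>k. F (yk k)) \<longlonglongrightarrow> F y" unfolding F_def S_def
      by (intro continuous_on_tendsto_compose[OF cont]) auto
    then have "(\<lambda>k. F y - F (yk k)) \<longlonglongrightarrow> 0"
      using tendsto_diff[OF tendsto_const[of "F y"]] by fastforce
    then have "measure M (A K) \<le> 0" using le by (intro LIMSEQ_le_const) auto
    then have "measure M (A K) = 0" using measure_nonneg[of M "A K"] by linarith
    then show ?thesis using Asets by (intro null_setsI) (simp add: emeasure_eq_measure)
  qed
  have "(\<Union>K. A K) \<in> null_sets M" using Anull by blast
  moreover have "{\<omega>\<in>space M. X0 \<omega> $ j = t} \<in> sets M" by measurable
  ultimately show ?thesis using cover null_sets_subset by blast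
qed

lemma tie_null:
  fixes X :: "nat \<Rightarrow> 'w \<Rightarrow> real^'d::finite"
  assumes P: "prob_space M"
    and X_meas: "\<And>i. X i \<in> borel_measurable M"
    and X_indep: "prob_space.indep_vars M (\<lambda>_. borel) X UNIV"
    and X_ident: "\<And>i. distr M borel (X i) = distr M borel (X 0)"
    and F_cont: "continuous_on UNIV
                   (\<lambda>y::real^'d. measure M {\<omega>\<in>space M. \<forall>j. X 0 \<omega> $ j \<le> y $ j})"
    and ik: "i \<noteq> k"
  shows "{\<omega>\<in>space M. X i \<omega> $ j = X k \<omega> $ j} \<in> null_sets M"
proof -
  interpret prob_space M by fact
  have mX[measurable]: "\<And>i j. (\<lambda>\<omega>. X i \<omega> $ j) \<in> borel_measurable M"
    using measurable_compose[OF X_meas vn_meas[where 'd='d]] by (simp add: o_def)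
  have iv1: "indep_var (PiM {i} (\<lambda>_. borel)) (\<lambda>\<omega>. restrict (\<lambda>l. X l \<omega>) {i})
                       (PiM {k} (\<lambda>_. borel)) (\<lambda>\<omega>. restrict (\<lambda>l. X l \<omega>) {k})"
  proof -
    have "{i} \<inter> {k} = {}" using ik by auto
    then show ?thesis by (rule indep_var_restrict[OF X_indep _ subset_UNIV subset_UNIV])
  qed
  have Y1: "(\<lambda>f::nat \<Rightarrow> real^'d. f i $ j) \<in> measurable (PiM {i} (\<lambda>_. borel)) borel"
    using measurable_compose[OF measurable_component_singleton[of i "{i}" "\<lambda>_. borel"] vn_meas[where 'd='d]] by (simp add: o_def)
  have Y2: "(\<lambda>f::nat \<Rightarrow> real^'d. f k $ j) \<in> measurable (PiM {k} (\<lambda>_. borel)) borel"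
    using measurable_compose[OF measurable_component_singleton[of k "{k}" "\<lambda>_. borel"] vn_meas[where 'd='d]] by (simp add: o_def)
  have iv: "indep_var borel (\<lambda>\<omega>. X i \<omega> $ j) borel (\<lambda>\<omega>. X k \<omega> $ j)"
    using indep_var_compose[OF iv1 Y1 Y2] by (simp add: o_def)
  have prod: "distr M borel (\<lambda>\<omega>. X i \<omega> $ j) \<Otimes>\<^sub>M distr M borel (\<lambda>\<omega>. X k \<omega> $ j) =
              distr M (borel \<Otimes>\<^sub>M borel) (\<lambda>\<omega>. (X i \<omega> $ j, X k \<omega> $ j))"
    using iv unfolding indep_var_distribution_eq by blast
  define D where "D = {p::real\<times>real. fst p = snd p}"
  have "D = {p \<in> space (borel \<Otimes>\<^sub>M borel). fst p = snd p}"
    by (auto simp: D_def space_pair_measure)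
  also have "\<dots> \<in> sets (borel \<Otimes>\<^sub>M borel)" by measurable
  finally have Dm: "D \<in> sets (borel \<Otimes>\<^sub>M borel)" .
  have vset: "{v::real^'d. v $ j = a} \<in> sets borel" for a
    by (intro borel_closed closed_Collect_eq continuous_intros)
  have pt0: "emeasure (distr M borel (\<lambda>\<omega>. X k \<omega> $ j)) {a} = 0" for a
  proof -
    have "emeasure (distr M borel (\<lambda>\<omega>. X k \<omega> $ j)) {a} = emeasure M ((\<lambda>\<omega>. X k \<omega> $ j) -` {a} \<inter> space M)"
      by (rule emeasure_distr) (simp_all add: mX)
    also have "(\<lambda>\<omega>. X k \<omega> $ j) -` {a} \<inter> space M = X k -` {v. v $ j = a} \<inter> space M" by auto
    also have "emeasure M (X k -` {v. v $ j = a} \<inter> space M) = emeasure (distr M borel (X k)) {v. v $ j = a}"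
      by (rule emeasure_distr[symmetric]) (simp_all add: X_meas vset)
    also have "\<dots> = emeasure (distr M borel (X 0)) {v. v $ j = a}" by (subst X_ident[of k]) (rule refl)
    also have "\<dots> = emeasure M (X 0 -` {v. v $ j = a} \<inter> space M)"
      by (rule emeasure_distr) (simp_all add: X_meas vset)
    also have "X 0 -` {v. v $ j = a} \<inter> space M = {\<omega>\<in>space M. X 0 \<omega> $ j = a}" by auto
    also have "emeasure M \<dots> = 0" using marg_null[OF P X_meas F_cont, of j a] by auto
    finally show ?thesis .
  qed
  interpret Mk: prob_space "distr M borel (\<lambda>\<omega>. X k \<omega> $ j)" by (intro prob_space_distr) measurable
  have "emeasure M {\<omega>\<in>space M. X i \<omega> $ j = X k \<omega> $ j} =
        emeasure (distr M (borel \<Otimes>\<^sub>M borel) (\<lambda>\<omega>. (X i \<omega> $ j, X k \<omega> $ j))) D"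
    using Dm by (subst emeasure_distr) (auto simp: D_def intro!: arg_cong[where f="emeasure M"])
  also have "\<dots> = emeasure (distr M borel (\<lambda>\<omega>. X i \<omega> $ j) \<Otimes>\<^sub>M distr M borel (\<lambda>\<omega>. X k \<omega> $ j)) D"
    by (simp add: prod)
  also have "\<dots> = (\<integral>\<^sup>+a. emeasure (distr M borel (\<lambda>\<omega>. X k \<omega> $ j)) (Pair a -` D) \<partial>distr M borel (\<lambda>\<omega>. X i \<omega> $ j))"
  proof (rule Mk.emeasure_pair_measure_alt)
    have "sets (distr M borel (\<lambda>\<omega>. X i \<omega> $ j) \<Otimes>\<^sub>M distr M borel (\<lambda>\<omega>. X k \<omega> $ j)) = sets (borel \<Otimes>\<^sub>M borel)"
      by (intro sets_pair_measure_cong) auto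
    then show "D \<in> sets (distr M borel (\<lambda>\<omega>. X i \<omega> $ j) \<Otimes>\<^sub>M distr M borel (\<lambda>\<omega>. X k \<omega> $ j))"
      using Dm by simp
  qed
  also have "\<dots> = (\<integral>\<^sup>+a. 0 \<partial>distr M borel (\<lambda>\<omega>. X i \<omega> $ j))"
  proof (intro nn_integral_cong)
    fix a
    have "Pair a -` D = {a}" unfolding D_def by auto
    then show "emeasure (distr M borel (\<lambda>\<omega>. X k \<omega> $ j)) (Pair a -` D) = 0" using pt0 by simp
  qed
  also have "\<dots> = 0" by simp
  finally have "emeasure M {\<omega>\<in>space M. X i \<omega> $ j = X k \<omega> $ j} = 0" .
  moreover have "{\<omega>\<in>space M. X i \<omega> $ j = X k \<omega> $ j} \<in> sets M" by measurable
  ultimately show ?thesis by (intro null_setsI)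
qed



lemma fact_ge_pow2: "(2::nat) ^ (m - 1) \<le> fact m"
proof (induction m)
  case 0 then show ?case by simp
next
  case (Suc m)
  show ?case
  proof (cases m)
    case 0 then show ?thesis by simp
  next
    case (Suc m')
    have "(2::nat) ^ (Suc m - 1) = 2 * 2 ^ (m - 1)" using Suc by simp
    also have "\<dots> \<le> 2 * fact m" using Suc.IH by simp
    also have "\<dots> \<le> Suc m * fact m" using Suc by (intro mult_right_mono) auto
    also have "\<dots> = fact (Suc m)" by simp
    finally show ?thesis .
  qed
qed

lemma choose_fact_le: "(n choose m) * fact m \<le> n ^ m"
proof (cases "m \<le> n")
  case True
  have eq: "fact m * fact (n - m) * (n choose m) = fact n" using binomial_fact_lemma[OF True] .
  have "fact n div fact (n - m) = (n choose m) * fact m"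
    by (subst eq[symmetric]) (simp add: mult.commute mult.left_commute)
  with fact_div_fact_le_pow[OF True] show ?thesis by simp
next
  case False then show ?thesis by (simp add: binomial_eq_0)
qed

lemma multi_tail:
  assumes i: "i < n"
  shows "measure_pmf.prob (multinomial_unif n) {w. m \<le> w ! i} \<le> real (n choose m) / real n ^ m"
proof -
  let ?P = "Pi_pmf {..<n} 0 (\<lambda>_. pmf_of_set {..<n})"
  have n: "n > 0" using i by simp
  define B where "B S = Pi {..<n} (\<lambda>k. if k \<in> S then {i} else UNIV)" for S :: "nat set"
  define Ss where "Ss = {S. S \<subseteq> {..<n} \<and> card S = m}"
  have finSs: "finite Ss" unfolding Ss_def by (rule finite_subset[of _ "Pow {..<n}"]) auto
  have "measure_pmf.prob (multinomial_unif n) {w. m \<le> w ! i} =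
        measure_pmf.prob ?P {f. m \<le> card {k\<in>{..<n}. f k = i}}"
    unfolding multinomial_unif_def using i by (simp add: vimage_def)
  also have "\<dots> \<le> measure_pmf.prob ?P (\<Union>S\<in>Ss. B S)"
  proof (rule measure_pmf.finite_measure_mono)
    show "{f. m \<le> card {k\<in>{..<n}. f k = i}} \<subseteq> (\<Union>S\<in>Ss. B S)"
    proof
      fix f assume "f \<in> {f. m \<le> card {k\<in>{..<n}. f k = i}}"
      then obtain T where T: "T \<subseteq> {k\<in>{..<n}. f k = i}" "card T = m"
        by (auto elim: obtain_subset_with_card_n)
      then have "T \<in> Ss" "f \<in> B T" unfolding Ss_def B_def by auto
      then show "f \<in> (\<Union>S\<in>Ss. B S)" by blast
    qed
  qed simp
  also have "\<dots> \<le> (\<Sum>S\<in>Ss. measure_pmf.prob ?P (B S))"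
    by (rule measure_pmf.finite_measure_subadditive_finite[OF finSs]) simp
  also have "\<dots> = (\<Sum>S\<in>Ss. (1 / real n) ^ m)"
  proof (rule sum.cong[OF refl])
    fix S assume S: "S \<in> Ss"
    have "measure_pmf.prob ?P (B S) =
          (\<Prod>k\<in>{..<n}. measure_pmf.prob (pmf_of_set {..<n}) (if k \<in> S then {i} else UNIV))"
      unfolding B_def by (rule measure_Pi_pmf_Pi) simp
    also have "\<dots> = (\<Prod>k\<in>{..<n}. if k \<in> S then 1 / real n else 1)"
    proof (intro prod.cong refl)
      fix k
      have "measure_pmf.prob (pmf_of_set {..<n}) {i} = 1 / real n"
        using n i by (subst measure_pmf_of_set) auto
      then show "measure_pmf.prob (pmf_of_set {..<n}) (if k \<in> S then {i} else UNIV) = (if k \<in> S then 1 / real n else 1)"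
        by simp
    qed
    also have "\<dots> = (1 / real n) ^ card ({..<n} \<inter> S)"
      by (simp add: prod.If_cases Int_commute)
    also have "{..<n} \<inter> S = S" using S unfolding Ss_def by auto
    finally show "measure_pmf.prob ?P (B S) = (1 / real n) ^ m" using S unfolding Ss_def by simp
  qed
  also have "\<dots> = real (n choose m) * (1 / real n) ^ m"
    unfolding Ss_def using n_subsets[of "{..<n}" m] by simp
  finally show ?thesis by (simp add: power_divide)
qed

lemma multi_tail2:
  assumes i: "i < n"
  shows "measure_pmf.prob (multinomial_unif n) {w. m \<le> w ! i} \<le> 1 / real (2 ^ (m - 1))"
proof -
  have n: "n > 0" using i by simp
  have "real (n choose m) / real n ^ m \<le> 1 / real (fact m)"
    using choose_fact_le[of n m] n
    by (simp add: field_simps) (metis of_nat_fact of_nat_le_iff of_nat_mult of_nat_power)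
  also have "\<dots> \<le> 1 / real (2 ^ (m - 1))"
  proof -
    have A: "real (2^(m-1)) \<le> real (fact m)" by (simp only: of_nat_le_iff fact_ge_pow2)
    show ?thesis by (rule divide_left_mono[OF A]) simp_all
  qed
  finally show ?thesis using multi_tail[OF i, of m] by linarith
qed




lemma E_meas:
  fixes X :: "nat \<Rightarrow> 'w \<Rightarrow> real^'d::finite" and W :: "'w \<Rightarrow> nat list"
  assumes X_meas: "\<And>i. X i \<in> borel_measurable M" and Wm: "W \<in> measurable M (count_space UNIV)"
  shows "{\<omega>\<in>space M. (SUP u\<in>unit_cube. \<bar>boot_C n (\<lambda>i. X i \<omega>) (W \<omega>) u
                                       - boot_Ctilde n (\<lambda>i. X i \<omega>) (W \<omega>) u\<bar>) > c} \<in> sets M"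
proof -
  define Dv where "Dv \<omega> u = \<bar>boot_C n (\<lambda>i. X i \<omega>) (W \<omega>) u - boot_Ctilde n (\<lambda>i. X i \<omega>) (W \<omega>) u\<bar>" for \<omega> u
  define V where "V \<omega> pq = vpq n (\<lambda>i. X i \<omega>) (W \<omega>) (fst pq) (snd pq)" for \<omega> pq
  define PQ where "PQ = ((UNIV::'d set) \<rightarrow>\<^sub>E {..<2*n+2}) \<times> ((UNIV::'d set) \<rightarrow>\<^sub>E {..<2*n+2})"
  have ne: "unit_cube \<noteq> {}" unfolding unit_cube_def by (auto intro!: exI[of _ 0])
  have bdd: "bdd_above (Dv \<omega> ` unit_cube)" for \<omega>
    unfolding Dv_def by (rule bdd_aboveI2, rule diff_bound_w)
  have eq: "{\<omega>\<in>space M. c < (SUP u\<in>unit_cube. Dv \<omega> u)} =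
       (\<Union>pq\<in>PQ. {\<omega>\<in>space M. V \<omega> pq \<in> unit_cube \<and> c < Dv \<omega> (V \<omega> pq)})"
  proof (intro equalityI subsetI)
    fix \<omega> assume \<omega>: "\<omega> \<in> {\<omega>\<in>space M. c < (SUP u\<in>unit_cube. Dv \<omega> u)}"
    then obtain u where u: "u \<in> unit_cube" "c < Dv \<omega> u" using less_cSUP_iff[OF ne bdd] by auto
    obtain p q where pq: "\<forall>j. p j < 2*n+2 \<and> q j < 2*n+2" "vpq n (\<lambda>i. X i \<omega>) (W \<omega>) p q \<in> unit_cube"
       "boot_C n (\<lambda>i. X i \<omega>) (W \<omega>) (vpq n (\<lambda>i. X i \<omega>) (W \<omega>) p q) = boot_C n (\<lambda>i. X i \<omega>) (W \<omega>) u"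
       "boot_Ctilde n (\<lambda>i. X i \<omega>) (W \<omega>) (vpq n (\<lambda>i. X i \<omega>) (W \<omega>) p q) = boot_Ctilde n (\<lambda>i. X i \<omega>) (W \<omega>) u"
      using reduce[OF u(1), of n "\<lambda>i. X i \<omega>" "W \<omega>"] by blast
    have "(p, q) \<in> PQ" using pq(1) unfolding PQ_def by auto
    moreover have "\<omega> \<in> {\<omega>\<in>space M. V \<omega> (p,q) \<in> unit_cube \<and> c < Dv \<omega> (V \<omega> (p,q))}"
      using \<omega> pq u unfolding V_def Dv_def by auto
    ultimately show "\<omega> \<in> (\<Union>pq\<in>PQ. {\<omega>\<in>space M. V \<omega> pq \<in> unit_cube \<and> c < Dv \<omega> (V \<omega> pq)})" by blast
  next
    fix \<omega> assume "\<omega> \<in> (\<Union>pq\<in>PQ. {\<omega>\<in>space M. V \<omega> pq \<in> unit_cube \<and> c < Dv \<omega> (V \<omega> pq)})"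
    then obtain pq where "\<omega> \<in> space M" "V \<omega> pq \<in> unit_cube" "c < Dv \<omega> (V \<omega> pq)" by blast
    then show "\<omega> \<in> {\<omega>\<in>space M. c < (SUP u\<in>unit_cube. Dv \<omega> u)}"
      using less_cSUP_iff[OF ne bdd] by auto
  qed
  have finPQ: "finite PQ" unfolding PQ_def by (intro finite_cartesian_product finite_PiE) auto
  have mX[measurable]: "(\<lambda>\<omega>. X i \<omega> $ j) \<in> borel_measurable M" for i j
    using measurable_compose[OF X_meas vn_meas] by (simp add: o_def)
  have mW[measurable]: "(\<lambda>\<omega>. real (W \<omega> ! k)) \<in> borel_measurable M" for k
    using measurable_compose[OF Wm, of "\<lambda>w. real (w!k)" borel] by simp
  have mL[measurable]: "(\<lambda>\<omega>. Lr n (\<lambda>i. X i \<omega>) (W \<omega>) i j) \<in> borel_measurable M" for i j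
    unfolding Lr_def by measurable
  have mR[measurable]: "(\<lambda>\<omega>. boot_rank n (\<lambda>i. X i \<omega>) (W \<omega>) i j) \<in> borel_measurable M" for i j
    unfolding boot_rank_def by measurable
  have mc[measurable]: "(\<lambda>\<omega>. cand n (\<lambda>i. X i \<omega>) (W \<omega>) j r) \<in> borel_measurable M" for j r
    unfolding cand_def by measurable
  have mV[measurable]: "(\<lambda>\<omega>. V \<omega> pq $ j) \<in> borel_measurable M" for j pq
    unfolding V_def vpq_def by simp measurable
  have each: "{\<omega>\<in>space M. V \<omega> pq \<in> unit_cube \<and> c < Dv \<omega> (V \<omega> pq)} \<in> sets M" for pq
    unfolding Dv_def boot_C_repr boot_Ctilde_def unit_cube_def mem_Collect_eq by measurable
  have "{\<omega>\<in>space M. c < (SUP u\<in>unit_cube. Dv \<omega> u)} \<in> sets M"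
    unfolding eq using finPQ each by (intro sets.finite_UN) auto
  then show ?thesis unfolding Dv_def by simp
qed

theorem proposition1:
  fixes M :: "'w measure"
    and X :: "nat \<Rightarrow> 'w \<Rightarrow> real^'d::finite"
    and W :: "nat \<Rightarrow> 'w \<Rightarrow> nat list"
  assumes P: "prob_space M"
    and X_meas: "\<And>i. X i \<in> borel_measurable M"
    and X_indep: "prob_space.indep_vars M (\<lambda>_. borel) X UNIV"
    and X_ident: "\<And>i. distr M borel (X i) = distr M borel (X 0)"
    and F_cont: "continuous_on UNIV
                   (\<lambda>y::real^'d. measure M {\<omega>\<in>space M. \<forall>j. X 0 \<omega> $ j \<le> y $ j})"
    and W_meas: "\<And>n. W n \<in> measurable M (count_space UNIV)"
    and W_distr: "\<And>n. distr M (count_space UNIV) (W n) = measure_pmf (multinomial_unif n)"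
    and W_indep: "\<And>n. prob_space.indep_set M
                     {W n -` A \<inter> space M | A. A \<in> sets (count_space UNIV)}
                     {(\<lambda>\<omega>. \<lambda>i\<in>{..<n}. X i \<omega>) -` B \<inter> space M
                        | B. B \<in> sets (Pi\<^sub>M {..<n} (\<lambda>_. borel))}"
  shows "\<forall>\<epsilon>>0. \<exists>K N. \<forall>n\<ge>N.
           let E = {\<omega>\<in>space M.
                     (SUP u\<in>unit_cube. \<bar>boot_C n (\<lambda>i. X i \<omega>) (W n \<omega>) u
                                       - boot_Ctilde n (\<lambda>i. X i \<omega>) (W n \<omega>) u\<bar>)
                     > K * ln (real n) / real n}
           in E \<in> sets M \<and> measure M E < \<epsilon>"
proof (intro allI impI)
  fix \<epsilon> :: real assume \<epsilon>: "\<epsilon> > 0"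
  interpret prob_space M by (rule P)
  define K where "K = 5 * real CARD('d) / ln 2"
  obtain N0 :: nat where N0: "0 < N0" "inverse (real N0) < \<epsilon>" using ex_inverse_of_nat_less[OF \<epsilon>] by blast
  define N where "N = max 2 N0"
  show "\<exists>K N. \<forall>n\<ge>N.
           let E = {\<omega>\<in>space M.
                     (SUP u\<in>unit_cube. \<bar>boot_C n (\<lambda>i. X i \<omega>) (W n \<omega>) u
                                       - boot_Ctilde n (\<lambda>i. X i \<omega>) (W n \<omega>) u\<bar>)
                     > K * ln (real n) / real n}
           in E \<in> sets M \<and> measure M E < \<epsilon>"
  proof (intro exI[of _ K] exI[of _ N] allI impI)
    fix n assume nN: "N \<le> n"
    have n2: "2 \<le> n" and nN0: "N0 \<le> n" using nN unfolding N_def by auto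
    define k where "k = nat \<lceil>log 2 (real n)\<rceil>"
    define m where "m = 2*k+2"
    define E where "E = {\<omega>\<in>space M.
                     (SUP u\<in>unit_cube. \<bar>boot_C n (\<lambda>i. X i \<omega>) (W n \<omega>) u
                                       - boot_Ctilde n (\<lambda>i. X i \<omega>) (W n \<omega>) u\<bar>)
                     > K * ln (real n) / real n}"
    define T where "T = (\<Union>i\<in>{..<n}. \<Union>l\<in>{..<n} - {i}. \<Union>j\<in>(UNIV::'d set). {\<omega>\<in>space M. X i \<omega> $ j = X l \<omega> $ j})"
    define B where "B = (\<Union>i\<in>{..<n}. {\<omega>\<in>space M. real m \<le> real (W n \<omega> ! i)})"
    have mW[measurable]: "(\<lambda>\<omega>. real (W n \<omega> ! k)) \<in> borel_measurable M" for k
      using measurable_compose[OF W_meas, of "\<lambda>w. real (w!k)" borel] by simp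
    have Es: "E \<in> sets M" unfolding E_def by (rule E_meas[OF X_meas W_meas])
    have Tnull: "T \<in> null_sets M" unfolding T_def
      by (intro null_sets_UN' countable_finite tie_null[OF P X_meas X_indep X_ident F_cont]) auto
    have Bs: "B \<in> sets M" unfolding B_def by measurable
    have log1: "1 \<le> log 2 (real n)" using n2 by (simp add: le_log_iff)
    have k_ge: "log 2 (real n) \<le> real k" unfolding k_def by (rule real_nat_ceiling_ge)
    have k_le: "real k \<le> log 2 (real n) + 1" unfolding k_def using log1
      by (simp add: of_nat_nat)
    have pow_k: "real n \<le> 2 ^ k"
    proof -
      have "real n = 2 powr (log 2 (real n))" using n2 by simp
      also have "\<dots> \<le> 2 powr (real k)" using k_ge by (intro powr_mono) auto
      also have "\<dots> = 2 ^ k" by (simp add: powr_realpow)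
      finally show ?thesis .
    qed
    have Kbound: "real CARD('d) * real (m - 1) \<le> K * ln (real n)"
    proof -
      have "real (m - 1) = 2 * real k + 1" unfolding m_def by simp
      also have "\<dots> \<le> 5 * log 2 (real n)" using k_le log1 by linarith
      also have "\<dots> = 5 * ln (real n) / ln 2" by (simp add: log_def)
      finally have "real (m - 1) \<le> 5 * ln (real n) / ln 2" .
      then have "real CARD('d) * real (m - 1) \<le> real CARD('d) * (5 * ln (real n) / ln 2)"
        by (intro mult_left_mono) auto
      also have "\<dots> = K * ln (real n)" unfolding K_def by simp
      finally show ?thesis .
    qed
    have sub: "E \<subseteq> B \<union> T"
    proof
      fix \<omega> assume \<omega>E: "\<omega> \<in> E"
      show "\<omega> \<in> B \<union> T"
      proof (rule ccontr)
        assume nBT: "\<omega> \<notin> B \<union> T"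
        have \<omega>: "\<omega> \<in> space M" using \<omega>E unfolding E_def by auto
        have noties: "i = l" if "i < n" "l < n" "X i \<omega> $ j = X l \<omega> $ j" for i l j
          using nBT \<omega> that unfolding T_def by blast
        have wm: "W n \<omega> ! i \<le> m - 1" if "i < n" for i
        proof -
          have "\<not> m \<le> W n \<omega> ! i" using nBT \<omega> that unfolding B_def by auto
          then show ?thesis unfolding m_def by linarith
        qed
        have "(SUP u\<in>unit_cube. \<bar>boot_C n (\<lambda>i. X i \<omega>) (W n \<omega>) u
                                       - boot_Ctilde n (\<lambda>i. X i \<omega>) (W n \<omega>) u\<bar>)
              \<le> real CARD('d) * real (m - 1) / real n"
        proof (rule cSUP_least)
          show "unit_cube \<noteq> {}" unfolding unit_cube_def by (auto intro!: exI[of _ 0])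
        next
          fix u :: "real^'d"
          show "\<bar>boot_C n (\<lambda>i. X i \<omega>) (W n \<omega>) u - boot_Ctilde n (\<lambda>i. X i \<omega>) (W n \<omega>) u\<bar>
                \<le> real CARD('d) * real (m - 1) / real n"
            by (rule diff_bound) (use noties wm in auto)
        qed
        also have "\<dots> \<le> K * ln (real n) / real n"
          using Kbound n2 by (intro divide_right_mono) auto
        finally show False using \<omega>E unfolding E_def by auto
      qed
    qed
    have "measure M E \<le> measure M (B \<union> T)"
      using sub Bs Tnull by (intro finite_measure_mono) auto
    also have "\<dots> = measure M B" using Bs Tnull by (rule measure_Un_null_set)
    also have "\<dots> \<le> (\<Sum>i<n. measure M {\<omega>\<in>space M. real m \<le> real (W n \<omega> ! i)})"
      unfolding B_def by (rule finite_measure_subadditive_finite) (simp, rule image_subsetI, measurable)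
    also have "\<dots> \<le> (\<Sum>i<n. 1 / real (2 ^ (m - 1)))"
    proof (rule sum_mono)
      fix i assume i: "i \<in> {..<n}"
      have "measure M {\<omega>\<in>space M. real m \<le> real (W n \<omega> ! i)} = measure M (W n -` {w. m \<le> w ! i} \<inter> space M)"
        by (intro arg_cong[where f="measure M"]) auto
      also have "\<dots> = measure (distr M (count_space UNIV) (W n)) {w. m \<le> w ! i}"
        by (rule measure_distr[symmetric]) (use W_meas in auto)
      also have "\<dots> = measure_pmf.prob (multinomial_unif n) {w. m \<le> w ! i}"
        by (simp add: W_distr)
      also have "\<dots> \<le> 1 / real (2 ^ (m - 1))" using i by (intro multi_tail2) auto
      finally show "measure M {\<omega>\<in>space M. real m \<le> real (W n \<omega> ! i)} \<le> 1 / real (2 ^ (m - 1))" .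
    qed
    also have "\<dots> = real n / 2 ^ (2 * k + 1)" unfolding m_def by simp
    also have "\<dots> \<le> real n / (2 * real n ^ 2)"
    proof -
      have "2 * real n ^ 2 \<le> 2 * (2 ^ k) ^ 2"
        using pow_k by (intro mult_left_mono power_mono) auto
      also have "\<dots> = 2 ^ (2 * k + 1)" by (simp add: power_mult[symmetric] mult.commute)
      finally show ?thesis using n2 by (intro divide_left_mono) auto
    qed
    also have "\<dots> < 1 / real n" using n2 by (simp add: power2_eq_square field_simps)
    also have "\<dots> \<le> 1 / real N0"
    proof -
      have "0 < real N0" using N0 by simp
      then show ?thesis using nN0 by (intro divide_left_mono) auto
    qed
    also have "\<dots> < \<epsilon>" using N0 by (simp add: inverse_eq_divide)
    finally have "measure M E < \<epsilon>" .
    then show "let E = {\<omega>\<in>space M.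
                     (SUP u\<in>unit_cube. \<bar>boot_C n (\<lambda>i. X i \<omega>) (W n \<omega>) u
                                       - boot_Ctilde n (\<lambda>i. X i \<omega>) (W n \<omega>) u\<bar>)
                     > K * ln (real n) / real n}
           in E \<in> sets M \<and> measure M E < \<epsilon>"
      using Es unfolding E_def Let_def by auto
  qed
qed


end
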